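(* Let $k>l\ge0$ be integers, $\theta\in\mathbb{R}$, $\xi=e^{i\theta}$, $f:\mathbb{N}\to[0,\infty)$, and $A=\xi(a^\dagger)^ka^l+\xi^*(a^\dagger)^la^k+f(a^\dagger a)$ with domain $\mathcal{D}_0$. Let $K_\pm=\operatorname{Ran}(A\pm i)^\perp$ and $\psi^\pm\in K_\pm$, with coefficients $c^\pm_n=\langle\phi_n,\psi^\pm\rangle$. Then for all $n\in\mathbb{N}$, $$e^{-i\theta}\beta^{kl}_nc^\pm_{n+(k-l)}+e^{i\theta}\beta^{lk}_nc^\pm_{n-(k-l)}+(f(n)\mp i)c^\pm_n=0,$$ with the convention $c^\pm_m=0$ for $m<0$.
   Context: $\mathbb{N}=\{0,1,2,\dots\}$. $\mathcal{H}$ is a separable complex Hilbert space, inner product antilinear in the first argument, with orthonormal basis $(\phi_n)_{n\in\mathbb{N}}$; $\mathcal{D}_0$ is the set of finite linear combinations of the $\phi_n$. The operators $a,a^\dagger$ have domain $\mathcal{D}_0$ and act by $a\phi_n=\sqrt{n}\,\phi_{n-1}$ ($a\phi_0=0$), $a^\dagger\phi_n=\sqrt{n+1}\,\phi_{n+1}$, extended linearly. $f(a^\dagger a)$ has domain $\mathcal{D}_0$ and $f(a^\dagger a)\phi_n=f(n)\phi_n$. For integers $x$ and $s\ge0$, $(x,s)=x(x+1)\cdots(x+s-1)$ ($=1$ if $s=0$), with the convention $(x,s)=0$ whenever $x$ is a negative integer; for integers $n$ and $k,l\ge0$, $\beta^{kl}_n=\sqrt{(n-l+1,l)(n-l+1,k)}$.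 *)

theory Defs
  imports "HOL-Analysis.Analysis"
begin

text \<open>The Hilbert space H with orthonormal basis phi_n is represented by its
coefficient space l2(N): a vector psi corresponds to c n = <phi_n, psi>.\<close>

definition in_l2 :: "(nat \<Rightarrow> complex) \<Rightarrow> bool" where
  "in_l2 c \<longleftrightarrow> summable (\<lambda>n. (cmod (c n))\<^sup>2)"

definition in_D0 :: "(nat \<Rightarrow> complex) \<Rightarrow> bool" where
  "in_D0 u \<longleftrightarrow> finite {n. u n \<noteq> 0}"

definition l2_inner :: "(nat \<Rightarrow> complex) \<Rightarrow> (nat \<Rightarrow> complex) \<Rightarrow> complex" where
  "l2_inner u v = (\<Sum>n. cnj (u n) * v n)"

text \<open>Annihilation: a phi_n = sqrt n phi_(n-1); in coefficients (a u)_m = sqrt(m+1) u_(m+1).\<close>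
definition ann :: "(nat \<Rightarrow> complex) \<Rightarrow> (nat \<Rightarrow> complex)" where
  "ann u = (\<lambda>m. complex_of_real (sqrt (real (Suc m))) * u (Suc m))"

text \<open>Creation: a^dagger phi_n = sqrt(n+1) phi_(n+1); (a^dagger u)_m = sqrt m u_(m-1), 0 for m = 0.\<close>
definition cre :: "(nat \<Rightarrow> complex) \<Rightarrow> (nat \<Rightarrow> complex)" where
  "cre u = (\<lambda>m. if m = 0 then 0 else complex_of_real (sqrt (real m)) * u (m - 1))"

text \<open>f(a^dagger a) phi_n = f(n) phi_n.\<close>
definition fnum :: "(nat \<Rightarrow> real) \<Rightarrow> (nat \<Rightarrow> complex) \<Rightarrow> (nat \<Rightarrow> complex)" where
  "fnum f u = (\<lambda>m. complex_of_real (f m) * u m)"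

definition opA :: "nat \<Rightarrow> nat \<Rightarrow> real \<Rightarrow> (nat \<Rightarrow> real) \<Rightarrow> (nat \<Rightarrow> complex) \<Rightarrow> (nat \<Rightarrow> complex)" where
  "opA k l \<theta> f u = (\<lambda>m.
      exp (\<i> * complex_of_real \<theta>) * (cre ^^ k) ((ann ^^ l) u) m
    + cnj (exp (\<i> * complex_of_real \<theta>)) * (cre ^^ l) ((ann ^^ k) u) m
    + fnum f u m)"

definition rfac :: "int \<Rightarrow> nat \<Rightarrow> int" where
  "rfac x s = (if x < 0 then 0 else (\<Prod>j<s. x + int j))"

definition beta :: "nat \<Rightarrow> nat \<Rightarrow> int \<Rightarrow> real" where
  "beta k l n = sqrt (real_of_int (rfac (n - int l + 1) l * rfac (n - int l + 1) k))"

end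

theory Submission
  imports Defs
begin

definition dl :: "nat \<Rightarrow> nat \<Rightarrow> complex" where
  "dl n = (\<lambda>m. if m = n then 1 else 0)"

lemma ann_lin: "ann (\<lambda>m. a * v m) = (\<lambda>m. a * ann v m)"
  unfolding ann_def by (auto simp: fun_eq_iff)

lemma cre_lin: "cre (\<lambda>m. a * v m) = (\<lambda>m. a * cre v m)"
  unfolding cre_def by (auto simp: fun_eq_iff)

lemma ann_dl: "ann (dl n) = (\<lambda>m. complex_of_real (sqrt (real n)) * dl (n - 1) m)"
  unfolding ann_def dl_def by (auto simp: fun_eq_iff)

lemma cre_dl: "cre (dl n) = (\<lambda>m. complex_of_real (sqrt (real (Suc n))) * dl (Suc n) m)"
  unfolding cre_def dl_def by (auto simp: fun_eq_iff)

lemma ann_pow: "(ann ^^ q) (dl n) =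
   (\<lambda>m. complex_of_real (sqrt (\<Prod>i<q. real (n - i))) * dl (n - q) m)"
proof (induction q)
  case 0 then show ?case by simp
next
  case (Suc q)
  have "(ann ^^ Suc q) (dl n) = ann ((ann ^^ q) (dl n))" by simp
  also have "\<dots> = (\<lambda>m. complex_of_real (sqrt (\<Prod>i<q. real (n - i))) * ann (dl (n - q)) m)"
    by (simp add: Suc ann_lin)
  also have "\<dots> = (\<lambda>m. complex_of_real (sqrt (\<Prod>i<Suc q. real (n - i))) * dl (n - Suc q) m)"
    by (simp add: ann_dl fun_eq_iff real_sqrt_mult)
  finally show ?case .
qed

lemma cre_pow: "(cre ^^ p) (\<lambda>m. b * dl s m) =
   (\<lambda>m. b * complex_of_real (sqrt (\<Prod>i<p. real (s + 1 + i))) * dl (s + p) m)"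
proof (induction p)
  case 0 then show ?case by simp
next
  case (Suc p)
  have "(cre ^^ Suc p) (\<lambda>m. b * dl s m) = cre ((cre ^^ p) (\<lambda>m. b * dl s m))" by simp
  also have "\<dots> = (\<lambda>m. b * complex_of_real (sqrt (\<Prod>i<p. real (s + 1 + i))) * cre (dl (s + p)) m)"
    by (simp add: Suc cre_lin mult.assoc)
  also have "\<dots> = (\<lambda>m. b * complex_of_real (sqrt (\<Prod>i<Suc p. real (s + 1 + i))) * dl (s + Suc p) m)"
    by (simp add: cre_dl fun_eq_iff real_sqrt_mult)
  finally show ?case .
qed

lemma beta_zero: "n < q \<Longrightarrow> beta p q (int n) = 0"
proof -
  assume a: "n < q"
  have "rfac (int n - int q + 1) q = 0"
  proof (cases "int n - int q + 1 < 0")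
    case True then show ?thesis by (simp add: rfac_def)
  next
    case False
    then have e: "int n - int q + 1 = 0" using a by simp
    have "(\<Prod>j<q. 0 + int j) = 0" using a
      by (simp add: prod_zero_iff)
    then show ?thesis using e by (simp add: rfac_def)
  qed
  then show ?thesis by (simp add: beta_def)
qed

lemma coef_eq: "sqrt (\<Prod>i<q. real (n - i)) * sqrt (\<Prod>i<p. real (n - q + 1 + i)) = beta p q (int n)"
proof (cases "q \<le> n")
  case True
  have e: "int n - int q + 1 = int (n - q + 1)" using True by simp
  have r1: "real_of_int (rfac (int n - int q + 1) q) = (\<Prod>i<q. real (n - i))"
  proof -
    have "real_of_int (rfac (int n - int q + 1) q) = (\<Prod>j<q. real (n - q + 1 + j))"
      unfolding e rfac_def by (simp add: algebra_simps)
    also have "\<dots> = (\<Prod>i<q. real (n - q + 1 + (q - Suc i)))"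
      by (rule prod.nat_diff_reindex[symmetric])
    also have "\<dots> = (\<Prod>i<q. real (n - i))"
      using True by (intro prod.cong) auto
    finally show ?thesis .
  qed
  have r2: "real_of_int (rfac (int n - int q + 1) p) = (\<Prod>i<p. real (n - q + 1 + i))"
    unfolding e rfac_def by (simp add: algebra_simps)
  show ?thesis unfolding beta_def using r1 r2 by (simp add: real_sqrt_mult)
next
  case False
  then have "(\<Prod>i<q. real (n - i)) = 0"
    by (simp add: prod_zero_iff) (rule bexI[of _ n], auto)
  then show ?thesis using False beta_zero by simp
qed

lemma combo: "(cre ^^ p) ((ann ^^ q) (dl n)) =
  (\<lambda>m. complex_of_real (beta p q (int n)) * dl (n - q + p) m)"
  by (simp add: ann_pow cre_pow fun_eq_iff coef_eq[symmetric] mult.assoc)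

lemma sum_dl: "(\<lambda>m. cnj (a * dl p m) * c m) sums (cnj a * c p)"
proof -
  have "(\<lambda>m. cnj (a * dl p m) * c m) = (\<lambda>m. if m = p then cnj a * c m else 0)"
    by (auto simp: dl_def fun_eq_iff)
  then show ?thesis using sums_single[of p "\<lambda>m. cnj a * c m"] by simp
qed

theorem lemma4p6:
  fixes k l :: nat and \<theta> :: real and f :: "nat \<Rightarrow> real"
    and \<sigma> :: real and c :: "nat \<Rightarrow> complex"
  assumes "l < k"
    and "\<And>n. f n \<ge> 0"
    and "\<sigma> \<in> {1, -1}"
    and "in_l2 c"
    and "\<And>u. in_D0 u \<Longrightarrow>
           l2_inner (\<lambda>m. opA k l \<theta> f u m + complex_of_real \<sigma> * \<i> * u m) c = 0"
  shows "\<forall>n::nat.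
    exp (- (\<i> * complex_of_real \<theta>)) * complex_of_real (beta k l (int n)) * c (n + (k - l))
  + exp (\<i> * complex_of_real \<theta>) * complex_of_real (beta l k (int n))
      * (if k - l \<le> n then c (n - (k - l)) else 0)
  + (complex_of_real (f n) - complex_of_real \<sigma> * \<i>) * c n = 0"
proof
  fix n :: nat
  define \<xi> where "\<xi> = exp (\<i> * complex_of_real \<theta>)"
  have cx: "cnj \<xi> = exp (- (\<i> * complex_of_real \<theta>))"
    unfolding \<xi>_def exp_cnj by simp
  have D: "in_D0 (dl n)" unfolding in_D0_def dl_def by simp
  have eqA: "(\<lambda>m. opA k l \<theta> f (dl n) m + complex_of_real \<sigma> * \<i> * dl n m) =
    (\<lambda>m. (\<xi> * complex_of_real (beta k l (int n))) * dl (n - l + k) m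
       + (cnj \<xi> * complex_of_real (beta l k (int n))) * dl (n - k + l) m
       + (complex_of_real (f n) + complex_of_real \<sigma> * \<i>) * dl n m)"
    unfolding opA_def combo fnum_def \<xi>_def
    by (auto simp: fun_eq_iff dl_def algebra_simps)
  have S: "(\<lambda>m. cnj ((\<xi> * complex_of_real (beta k l (int n))) * dl (n - l + k) m
       + (cnj \<xi> * complex_of_real (beta l k (int n))) * dl (n - k + l) m
       + (complex_of_real (f n) + complex_of_real \<sigma> * \<i>) * dl n m) * c m)
     sums (cnj (\<xi> * complex_of_real (beta k l (int n))) * c (n - l + k)
       + cnj (cnj \<xi> * complex_of_real (beta l k (int n))) * c (n - k + l)
       + cnj (complex_of_real (f n) + complex_of_real \<sigma> * \<i>) * c n)"
  proof -
    have s1: "(\<lambda>m. cnj ((\<xi> * complex_of_real (beta k l (int n))) * dl (n - l + k) m) * c m)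
       sums (cnj (\<xi> * complex_of_real (beta k l (int n))) * c (n - l + k))" by (rule sum_dl)
    have s2: "(\<lambda>m. cnj ((cnj \<xi> * complex_of_real (beta l k (int n))) * dl (n - k + l) m) * c m)
       sums (cnj (cnj \<xi> * complex_of_real (beta l k (int n))) * c (n - k + l))" by (rule sum_dl)
    have s3: "(\<lambda>m. cnj ((complex_of_real (f n) + complex_of_real \<sigma> * \<i>) * dl n m) * c m)
       sums (cnj (complex_of_real (f n) + complex_of_real \<sigma> * \<i>) * c n)" by (rule sum_dl)
    have "(\<lambda>m. cnj ((\<xi> * complex_of_real (beta k l (int n))) * dl (n - l + k) m) * c m
        + cnj ((cnj \<xi> * complex_of_real (beta l k (int n))) * dl (n - k + l) m) * c m
        + cnj ((complex_of_real (f n) + complex_of_real \<sigma> * \<i>) * dl n m) * c m) sums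
       (cnj (\<xi> * complex_of_real (beta k l (int n))) * c (n - l + k)
       + cnj (cnj \<xi> * complex_of_real (beta l k (int n))) * c (n - k + l)
       + cnj (complex_of_real (f n) + complex_of_real \<sigma> * \<i>) * c n)"
      by (rule sums_add[OF sums_add[OF s1 s2] s3])
    then show ?thesis by (simp only: complex_cnj_add distrib_right)
  qed
  have L: "l2_inner (\<lambda>m. opA k l \<theta> f (dl n) m + complex_of_real \<sigma> * \<i> * dl n m) c = 0"
    using assms(5) D by blast
  have V: "l2_inner (\<lambda>m. opA k l \<theta> f (dl n) m + complex_of_real \<sigma> * \<i> * dl n m) c =
       cnj (\<xi> * complex_of_real (beta k l (int n))) * c (n - l + k)
       + cnj (cnj \<xi> * complex_of_real (beta l k (int n))) * c (n - k + l)
       + cnj (complex_of_real (f n) + complex_of_real \<sigma> * \<i>) * c n"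
    unfolding eqA l2_inner_def by (rule sums_unique[OF S, symmetric])
  have Z: "cnj (\<xi> * complex_of_real (beta k l (int n))) * c (n - l + k)
       + cnj (cnj \<xi> * complex_of_real (beta l k (int n))) * c (n - k + l)
       + cnj (complex_of_real (f n) + complex_of_real \<sigma> * \<i>) * c n = 0"
    using L unfolding V .
  have e1: "complex_of_real (beta k l (int n)) * c (n - l + k) = complex_of_real (beta k l (int n)) * c (n + (k - l))"
  proof (cases "l \<le> n")
    case True then have "n - l + k = n + (k - l)" using assms(1) by arith
    then show ?thesis by simp
  next
    case False then show ?thesis using beta_zero by simp
  qed
  have Z2: "cnj \<xi> * complex_of_real (beta k l (int n)) * c (n - l + k)
       + \<xi> * complex_of_real (beta l k (int n)) * c (n - k + l)
       + (complex_of_real (f n) - complex_of_real \<sigma> * \<i>) * c n = 0"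
    using Z by (simp add: complex_cnj_mult)
  have e2: "complex_of_real (beta l k (int n)) * c (n - k + l) = complex_of_real (beta l k (int n))
      * (if k - l \<le> n then c (n - (k - l)) else 0)"
  proof (cases "k \<le> n")
    case True
    have h1: "n - k + l = n - (k - l)" using True assms(1) by arith
    have h2: "(k - l \<le> n) = True" using True by simp
    show ?thesis by (simp only: h1 h2 if_True)
  next
    case False
    then have "beta l k (int n) = 0" using beta_zero by simp
    then show ?thesis by simp
  qed
  have G: "cnj \<xi> * complex_of_real (beta k l (int n)) * c (n + (k - l))
       + \<xi> * complex_of_real (beta l k (int n)) * (if k - l \<le> n then c (n - (k - l)) else 0)
       + (complex_of_real (f n) - complex_of_real \<sigma> * \<i>) * c n = 0"
    using Z2 e1 e2 by (simp only: mult.assoc)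
  show "exp (- (\<i> * complex_of_real \<theta>)) * complex_of_real (beta k l (int n)) * c (n + (k - l))
  + exp (\<i> * complex_of_real \<theta>) * complex_of_real (beta l k (int n))
      * (if k - l \<le> n then c (n - (k - l)) else 0)
  + (complex_of_real (f n) - complex_of_real \<sigma> * \<i>) * c n = 0"
    using G unfolding cx by (simp only: \<xi>_def)
qed

end
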